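(* Let $H$ be a red-blue colouring of $K_n$ satisfying $\mathrm{pack}(H) \le n^2/4$. Let $\{X_1, X_2\}$ be a partition of $V(H)$ with at most $(n-2)/6$ blue edges having both ends in $X_1$ or both ends in $X_2$. Then $n/2 - \sqrt{n} \le |X_i| \le n/2 + \sqrt{n}$ for $i \in [2]$.
   Context: A red-blue colouring $H$ of $K_n$ assigns red or blue to each edge of the complete graph on the $n$-vertex set $V(H)$; $H_R, H_B$ are the spanning subgraphs of red and blue edges. For a graph $F$, a fractional triangle packing is a function $\omega$ from the triangles of $F$ to $[0,1]$ with $\sum_{T \ni e}\omega(T) \le 1$ for every edge $e$; $\nu^*(F)$ is the maximum of $\sum_T\omega(T)$; $\mathrm{pack}(H) = 3(\nu^*(H_R)+\nu^*(H_B))$. *)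

theory Defs
  imports Complex_Main
begin

text \<open>Edges of the complete graph on vertex set V: the 2-element subsets of V.
  A graph F on V is given by its edge set E (a set of 2-element subsets of V).\<close>
definition complete_edges :: "'a set \<Rightarrow> 'a set set" where
  "complete_edges V = {e. e \<subseteq> V \<and> card e = 2}"

definition triangles :: "'a set set \<Rightarrow> 'a set set" where
  "triangles E = {T. finite T \<and> card T = 3 \<and> (\<forall>e. e \<subseteq> T \<and> card e = 2 \<longrightarrow> e \<in> E)}"

definition frac_tri_packing :: "'a set set \<Rightarrow> ('a set \<Rightarrow> real) \<Rightarrow> bool" where
  "frac_tri_packing E \<omega> \<longleftrightarrow>
     (\<forall>T\<in>triangles E. 0 \<le> \<omega> T \<and> \<omega> T \<le> 1) \<and>
     (\<forall>e\<in>E. (\<Sum>T\<in>{T\<in>triangles E. e \<subseteq> T}. \<omega> T) \<le> 1)"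

definition nu_star :: "'a set set \<Rightarrow> real" where
  "nu_star E = Sup {(\<Sum>T\<in>triangles E. \<omega> T) | \<omega>. frac_tri_packing E \<omega>}"

text \<open>A red-blue colouring of K_n on V is given by its set R of red edges
  (R \<subseteq> complete_edges V); the blue edges are the remaining ones.\<close>
definition blue_edges :: "'a set \<Rightarrow> 'a set set \<Rightarrow> 'a set set" where
  "blue_edges V R = complete_edges V - R"

definition pack :: "'a set \<Rightarrow> 'a set set \<Rightarrow> real" where
  "pack V R = 3 * (nu_star R + nu_star (blue_edges V R))"

end

theory Submission
  imports Defs
begin

lemma tri_subset:
  assumes "E \<subseteq> complete_edges V" "T \<in> triangles E"
  shows "T \<subseteq> V"
proof
  fix x assume x: "x \<in> T"
  have c: "card T = 3" "finite T" using assms(2) by (auto simp: triangles_def)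
  then have "card (T - {x}) = 2" using x by simp
  then obtain y where "y \<in> T - {x}" by (metis card.empty card_gt_0_iff ex_in_conv zero_neq_numeral)
  then have "{x,y} \<subseteq> T" "card {x,y} = 2" using x by auto
  then have "{x,y} \<in> E" using assms(2) by (auto simp: triangles_def)
  then show "x \<in> V" using assms(1) by (auto simp: complete_edges_def)
qed

lemma finite_tri:
  assumes "finite V" "E \<subseteq> complete_edges V"
  shows "finite (triangles E)"
proof -
  have "triangles E \<subseteq> Pow V" using tri_subset[OF assms(2)] by blast
  then show ?thesis using assms(1) finite_subset by blast
qed

lemma nu_star_ge:
  assumes "finite V" "E \<subseteq> complete_edges V" "frac_tri_packing E \<omega>"
  shows "(\<Sum>T\<in>triangles E. \<omega> T) \<le> nu_star E"
  unfolding nu_star_def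
proof (rule cSup_upper)
  show "(\<Sum>T\<in>triangles E. \<omega> T) \<in> {(\<Sum>T\<in>triangles E. \<omega> T) | \<omega>. frac_tri_packing E \<omega>}"
    using assms(3) by blast
  show "bdd_above {(\<Sum>T\<in>triangles E. \<omega> T) | \<omega>. frac_tri_packing E \<omega>}"
  proof (rule bdd_aboveI)
    fix s assume "s \<in> {(\<Sum>T\<in>triangles E. \<omega> T) | \<omega>. frac_tri_packing E \<omega>}"
    then obtain w where s: "s = (\<Sum>T\<in>triangles E. w T)" and w: "frac_tri_packing E w" by blast
    have "(\<Sum>T\<in>triangles E. w T) \<le> (\<Sum>T\<in>triangles E. 1)"
      by (rule sum_mono) (use w in \<open>auto simp: frac_tri_packing_def\<close>)
    then show "s \<le> real (card (triangles E))" using s by simp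
  qed
qed

lemma nu_star_nonneg:
  assumes "finite V" "E \<subseteq> complete_edges V"
  shows "0 \<le> nu_star E"
proof -
  have "frac_tri_packing E (\<lambda>_. 0)" by (simp add: frac_tri_packing_def)
  from nu_star_ge[OF assms this] show ?thesis by simp
qed

lemma ext_count:
  assumes "finite X" "e \<subseteq> X" "card e = 2"
  shows "card {T. T \<subseteq> X \<and> card T = 3 \<and> e \<subseteq> T} \<le> card X - 2"
proof -
  have fe: "finite e" using assms(3) card.infinite by fastforce
  have "{T. T \<subseteq> X \<and> card T = 3 \<and> e \<subseteq> T} \<subseteq> (\<lambda>x. insert x e) ` (X - e)"
  proof
    fix T assume T: "T \<in> {T. T \<subseteq> X \<and> card T = 3 \<and> e \<subseteq> T}"
    then have "finite T" using assms(1) finite_subset by blast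
    then have "card (T - e) = 1" using T fe assms(3) by (simp add: card_Diff_subset)
    then obtain x where x: "T - e = {x}" by (meson card_1_singletonE)
    then have "T = insert x e" using T by blast
    moreover have "x \<in> X - e" using x T by blast
    ultimately show "T \<in> (\<lambda>x. insert x e) ` (X - e)" by blast
  qed
  then have "card {T. T \<subseteq> X \<and> card T = 3 \<and> e \<subseteq> T} \<le> card ((\<lambda>x. insert x e) ` (X - e))"
    by (simp add: assms(1) card_mono)
  also have "\<dots> \<le> card (X - e)" by (rule card_image_le) (simp add: assms(1))
  also have "\<dots> = card X - 2" using assms fe by (simp add: card_Diff_subset)
  finally show ?thesis .
qed

lemma ev: "even (m * (m - 1::nat))" by (cases m) auto
lemma choose3: "6 * (a choose 3) = a * (a - 1) * (a - 2)"
proof (cases a)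
  case 0 then show ?thesis by simp
next
  case (Suc m)
  have 1: "Suc m * (m choose 2) = (Suc m choose 3) * 3"
    using Suc_times_binomial_eq[of m 2] by (simp add: numeral_3_eq_3)
  have 2: "2 * (m choose 2) = m * (m - 1)"
    using ev[of m] by (simp add: choose_two)
  have "6 * (a choose 3) = 2 * (Suc m * (m choose 2))" using 1 Suc by simp
  also have "\<dots> = Suc m * (2 * (m choose 2))" by simp
  also have "\<dots> = a * (a - 1) * (a - 2)" using 2 Suc by (simp add: algebra_simps)
  finally show ?thesis .
qed

lemma part_count:
  assumes "finite V" "R \<subseteq> complete_edges V" "X \<subseteq> V"
  shows "card X choose 3 \<le> card {T\<in>triangles R. T \<subseteq> X} + card {e\<in>blue_edges V R. e \<subseteq> X} * (card X - 2)"
proof -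
  let ?BX = "{e\<in>blue_edges V R. e \<subseteq> X}"
  let ?A = "\<lambda>e. {T. T \<subseteq> X \<and> card T = 3 \<and> e \<subseteq> T}"
  have fX: "finite X" using assms finite_subset by blast
  have fB: "finite ?BX"
  proof (rule finite_subset[of _ "Pow X"])
    show "?BX \<subseteq> Pow X" by blast
  qed (use fX in simp)
  have "{T. T \<subseteq> X \<and> card T = 3} \<subseteq> {T\<in>triangles R. T \<subseteq> X} \<union> (\<Union>e\<in>?BX. ?A e)"
  proof
    fix T assume T: "T \<in> {T. T \<subseteq> X \<and> card T = 3}"
    then have fT: "finite T" using fX finite_subset by blast
    show "T \<in> {T\<in>triangles R. T \<subseteq> X} \<union> (\<Union>e\<in>?BX. ?A e)"
    proof (cases "T \<in> triangles R")
      case True then show ?thesis using T by blast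
    next
      case False
      then obtain e where e: "e \<subseteq> T" "card e = 2" "e \<notin> R" using T fT by (auto simp: triangles_def)
      then have "e \<in> ?BX" using T assms(3) by (auto simp: blue_edges_def complete_edges_def)
      then show ?thesis using e T by blast
    qed
  qed
  then have "card X choose 3 \<le> card ({T\<in>triangles R. T \<subseteq> X} \<union> (\<Union>e\<in>?BX. ?A e))"
    using fX by (simp add: n_subsets[symmetric] card_mono)
  also have "\<dots> \<le> card {T\<in>triangles R. T \<subseteq> X} + card (\<Union>e\<in>?BX. ?A e)" by (rule card_Un_le)
  also have "card (\<Union>e\<in>?BX. ?A e) \<le> (\<Sum>e\<in>?BX. card (?A e))" using fB by (rule card_UN_le)
  also have "\<dots> \<le> card ?BX * (card X - 2)"
  proof -
    have "\<And>e. e \<in> ?BX \<Longrightarrow> card (?A e) \<le> card X - 2" using ext_count[OF fX]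
      by (auto simp: blue_edges_def complete_edges_def)
    from sum_bounded_above[where A="?BX" and f="\<lambda>e. card (?A e)" and K="card X - 2", OF this] show ?thesis by simp
  qed
  finally show ?thesis by simp
qed

definition F :: "nat \<Rightarrow> real" where
  "F a = (if 3 \<le> a then real a * (real a - 1) / 2 else 0)"

lemma tri_card_le:
  assumes "finite X" "T \<in> triangles R" "T \<subseteq> X"
  shows "3 \<le> card X"
  using assms card_mono[OF assms(1) assms(3)] by (auto simp: triangles_def)

lemma part_lower:
  assumes "finite V" "R \<subseteq> complete_edges V" "X \<subseteq> V"
  shows "F (card X) - 3 * real (card {e\<in>blue_edges V R. e \<subseteq> X})
     \<le> 3 * (real (card {T\<in>triangles R. T \<subseteq> X}) / (real (card X) - 2))"
proof -
  have fX: "finite X" using assms finite_subset by blast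
  define a where "a = card X"
  define t where "t = card {T\<in>triangles R. T \<subseteq> X}"
  define \<beta> where "\<beta> = card {e\<in>blue_edges V R. e \<subseteq> X}"
  show ?thesis
  proof (cases "3 \<le> a")
    case True
    have "a choose 3 \<le> t + \<beta> * (a - 2)" using part_count[OF assms] unfolding a_def t_def \<beta>_def .
    then have "real (a choose 3) \<le> real t + real \<beta> * real (a - 2)"
      by (metis of_nat_add of_nat_le_iff of_nat_mult)
    then have "real (6 * (a choose 3)) \<le> 6 * (real t + real \<beta> * (real a - 2))"
      using True by (simp add: of_nat_diff)
    then have "real a * (real a - 1) * (real a - 2) \<le> 6 * (real t + real \<beta> * (real a - 2))"
      unfolding choose3 using True by (simp add: of_nat_diff)
    moreover have pos: "real a - 2 > 0" using True by simp
    ultimately have "real a * (real a - 1) / 2 - 3 * real \<beta> \<le> 3 * (real t / (real a - 2))"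
      by (simp add: field_simps)
    then show ?thesis using True unfolding F_def a_def t_def \<beta>_def by simp
  next
    case False
    then have "{T\<in>triangles R. T \<subseteq> X} = {}" unfolding a_def using tri_card_le[OF fX] by blast
    then have "t = 0" unfolding t_def by (metis card.empty)
    then show ?thesis using False unfolding F_def a_def t_def \<beta>_def by simp
  qed
qed

lemma sum_if_const:
  assumes "finite A"
  shows "(\<Sum>x\<in>A. if P x then (c::real) else 0) = real (card {x\<in>A. P x}) * c"
  using assms by (simp add: sum.inter_filter[symmetric])

lemma frac_le1:
  assumes "c \<le> a - 2" 
  shows "real c / (real a - 2) \<le> 1" "0 \<le> real c / (real a - 2)"
proof -
  show "real c / (real a - 2) \<le> 1"
  proof (cases "c = 0")
    case False
    then have "real c \<le> real a - 2" "real a - 2 > 0" using assms by (auto simp: of_nat_diff)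
    then show ?thesis by simp
  qed simp
  show "0 \<le> real c / (real a - 2)"
  proof (cases "c = 0")
    case False
    then have "real c \<le> real a - 2" "real a - 2 > 0" using assms by (auto simp: of_nat_diff)
    then show ?thesis by simp
  qed simp
qed

lemma red_bound:
  assumes fV: "finite V" and RV: "R \<subseteq> complete_edges V"
    and U: "X1 \<union> X2 = V" and D: "X1 \<inter> X2 = {}"
  shows "F (card X1) + F (card X2) - 3 * real (card {e\<in>blue_edges V R. e \<subseteq> X1 \<or> e \<subseteq> X2})
         \<le> 3 * nu_star R"
proof -
  have f1: "finite X1" and f2: "finite X2" using fV U by auto
  define a where "a = card X1"
  define b where "b = card X2"
  define \<omega> where "\<omega> T = (if T \<subseteq> X1 then 1 / (real a - 2) else 0) + (if T \<subseteq> X2 then 1 / (real b - 2) else 0)" for T :: "'a set"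
  have fT: "finite (triangles R)" using finite_tri[OF fV RV] .
  have ne: "T \<noteq> {}" if "T \<in> triangles R" for T using that by (auto simp: triangles_def)
  have pack: "frac_tri_packing R \<omega>"
    unfolding frac_tri_packing_def
  proof (intro conjI ballI)
    fix T assume T: "T \<in> triangles R"
    have "0 \<le> \<omega> T \<and> \<omega> T \<le> 1"
    proof (cases "T \<subseteq> X1")
      case True
      then have "\<not> T \<subseteq> X2" using D ne[OF T] by blast
      moreover have "3 \<le> a" using tri_card_le[OF f1 T True] a_def by simp
      ultimately show ?thesis using True by (simp add: \<omega>_def)
    next
      case False
      show ?thesis
      proof (cases "T \<subseteq> X2")
        case True
        have "3 \<le> b" using tri_card_le[OF f2 T True] b_def by simp
        then show ?thesis using True False by (simp add: \<omega>_def)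
      qed (use False in \<open>simp add: \<omega>_def\<close>)
    qed
    then show "0 \<le> \<omega> T" "\<omega> T \<le> 1" by auto
  next
    fix e assume e: "e \<in> R"
    then have e2: "card e = 2" "e \<subseteq> V" using RV by (auto simp: complete_edges_def)
    let ?S = "{T \<in> triangles R. e \<subseteq> T}"
    have fS: "finite ?S" using fT by simp
    define c1 where "c1 = card {T\<in>?S. T \<subseteq> X1}"
    define c2 where "c2 = card {T\<in>?S. T \<subseteq> X2}"
    have sumeq: "(\<Sum>T\<in>?S. \<omega> T) = real c1 * (1 / (real a - 2)) + real c2 * (1 / (real b - 2))"
      unfolding \<omega>_def sum.distrib c1_def c2_def using fS by (simp only: sum_if_const)
    have cb: "card {T\<in>?S. T \<subseteq> X} \<le> card X - 2" if "e \<subseteq> X" "finite X" for X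
    proof -
      have "{T\<in>?S. T \<subseteq> X} \<subseteq> {T. T \<subseteq> X \<and> card T = 3 \<and> e \<subseteq> T}" by (auto simp: triangles_def)
      then have "card {T\<in>?S. T \<subseteq> X} \<le> card {T. T \<subseteq> X \<and> card T = 3 \<and> e \<subseteq> T}"
        using that by (intro card_mono) auto
      also have "\<dots> \<le> card X - 2" using ext_count[OF that(2) that(1) e2(1)] .
      finally show ?thesis .
    qed
    have z: "card {T\<in>?S. T \<subseteq> X} = 0" if "\<not> e \<subseteq> X" for X
    proof -
      have "{T\<in>?S. T \<subseteq> X} = {}" using that by blast
      then show ?thesis by (metis card.empty)
    qed
    have e0: "e \<noteq> {}" using e2 by auto
    show "(\<Sum>T\<in>?S. \<omega> T) \<le> 1"
    proof (cases "e \<subseteq> X1")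
      case True
      then have "\<not> e \<subseteq> X2" using D e0 by blast
      then have "c2 = 0" using z c2_def by simp
      moreover have "c1 \<le> a - 2" using cb[OF True f1] c1_def a_def by simp
      ultimately show ?thesis using sumeq frac_le1(1)[of c1 a] by simp
    next
      case False
      then have "c1 = 0" using z c1_def by simp
      moreover have "c2 \<le> b - 2"
      proof (cases "e \<subseteq> X2")
        case True then show ?thesis using cb[OF True f2] c2_def b_def by simp
      qed (use z c2_def in simp)
      ultimately show ?thesis using sumeq frac_le1(1)[of c2 b] by simp
    qed
  qed
  have "(\<Sum>T\<in>triangles R. \<omega> T) = real (card {T\<in>triangles R. T \<subseteq> X1}) * (1 / (real a - 2))
      + real (card {T\<in>triangles R. T \<subseteq> X2}) * (1 / (real b - 2))"
    unfolding \<omega>_def sum.distrib using fT by (simp only: sum_if_const)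
  also have "\<dots> = real (card {T\<in>triangles R. T \<subseteq> X1}) / (real a - 2)
      + real (card {T\<in>triangles R. T \<subseteq> X2}) / (real b - 2)" by simp
  finally have sw: "(\<Sum>T\<in>triangles R. \<omega> T) = \<dots>" .
  have l1: "F a - 3 * real (card {e\<in>blue_edges V R. e \<subseteq> X1}) \<le> 3 * (real (card {T\<in>triangles R. T \<subseteq> X1}) / (real a - 2))"
    using part_lower[OF fV RV, of X1] U a_def by blast
  have l2: "F b - 3 * real (card {e\<in>blue_edges V R. e \<subseteq> X2}) \<le> 3 * (real (card {T\<in>triangles R. T \<subseteq> X2}) / (real b - 2))"
    using part_lower[OF fV RV, of X2] U b_def by blast
  have "{e\<in>blue_edges V R. e \<subseteq> X1 \<or> e \<subseteq> X2} = {e\<in>blue_edges V R. e \<subseteq> X1} \<union> {e\<in>blue_edges V R. e \<subseteq> X2}" by blast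
  moreover have "{e\<in>blue_edges V R. e \<subseteq> X1} \<inter> {e\<in>blue_edges V R. e \<subseteq> X2} = {}"
  proof -
    have "x = {}" if "x \<subseteq> X1" "x \<subseteq> X2" for x :: "'a set" using D that by blast
    moreover have "x \<noteq> {}" if "x \<in> blue_edges V R" for x
      using that by (auto simp: blue_edges_def complete_edges_def)
    ultimately show ?thesis by blast
  qed
  moreover have "finite {e\<in>blue_edges V R. e \<subseteq> X1}" "finite {e\<in>blue_edges V R. e \<subseteq> X2}"
  proof -
    have "{e\<in>blue_edges V R. e \<subseteq> X1} \<subseteq> Pow X1" "{e\<in>blue_edges V R. e \<subseteq> X2} \<subseteq> Pow X2" by auto
    then show "finite {e\<in>blue_edges V R. e \<subseteq> X1}" "finite {e\<in>blue_edges V R. e \<subseteq> X2}"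
      using f1 f2 finite_subset by auto
  qed
  ultimately have bc: "card {e\<in>blue_edges V R. e \<subseteq> X1 \<or> e \<subseteq> X2} = card {e\<in>blue_edges V R. e \<subseteq> X1} + card {e\<in>blue_edges V R. e \<subseteq> X2}"
    by (simp add: card_Un_disjoint)
  have "(\<Sum>T\<in>triangles R. \<omega> T) \<le> nu_star R" using nu_star_ge[OF fV RV pack] .
  then show ?thesis using l1 l2 sw bc a_def b_def by simp
qed

lemma c1: fixes x y :: real
  assumes "x*(x-1)/2 + y*(y-1)/2 - (x+y-2)/2 \<le> (x+y)^2/4"
  shows "(x - (x+y)/2)^2 \<le> x+y"
proof -
  have e1: "(x - (x+y)/2)^2 = (x*x + y*y - 2*(x*y))/4" by (simp add: power2_eq_square field_simps)
  have e2: "(x+y)^2/4 = (x*x + y*y + 2*(x*y))/4" by (simp add: power2_eq_square field_simps)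
  have e3: "x*(x-1)/2 + y*(y-1)/2 - (x+y-2)/2 = (x*x + y*y - 2*x - 2*y + 2)/2" by (simp add: field_simps)
  have g: "(p - 2*x - 2*y + 2)/2 \<le> (p + 2*r)/4 \<Longrightarrow> (p - 2*r)/4 \<le> x+y" for p r :: real by (simp add: field_simps)
  show ?thesis using assms unfolding e1 e2 e3 using g[of "x*x+y*y" "x*y"] by (simp add: algebra_simps)
qed
lemma c2: fixes y :: real
  assumes "y*(y-1)/2 - (1+y-2)/2 \<le> (1+y)^2/4"
  shows "(1 - (1+y)/2)^2 \<le> 1+y"
proof -
  have e1: "(1 - (1+y)/2)^2 = (y*y - 2*y + 1)/4" by (simp add: power2_eq_square field_simps)
  have e2: "(1+y)^2/4 = (y*y + 2*y + 1)/4" by (simp add: power2_eq_square field_simps)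
  have e3: "y*(y-1)/2 - (1+y-2)/2 = (y*y - 2*y + 1)/2" by (simp add: field_simps)
  have g: "(p - 2*y + 1)/2 \<le> (p + 2*y + 1)/4 \<Longrightarrow> (p - 2*y + 1)/4 \<le> 1+y" for p :: real by (simp add: field_simps)
  show ?thesis using assms unfolding e1 e2 e3 using g[of "y*y"] by simp
qed
lemma c3: fixes y :: real
  assumes "y*(y-1)/2 - (2+y-2)/2 \<le> (2+y)^2/4"
  shows "(2 - (2+y)/2)^2 \<le> 2+y"
proof -
  have e1: "(2 - (2+y)/2)^2 = (y*y - 4*y + 4)/4" by (simp add: power2_eq_square field_simps)
  have e2: "(2+y)^2/4 = (y*y + 4*y + 4)/4" by (simp add: power2_eq_square field_simps)
  have e3: "y*(y-1)/2 - (2+y-2)/2 = (y*y - 2*y)/2" by (simp add: field_simps)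
  have g: "(p - 2*y)/2 \<le> (p + 4*y + 4)/4 \<Longrightarrow> (p - 4*y + 4)/4 \<le> 2+y" for p :: real by (simp add: field_simps)
  show ?thesis using assms unfolding e1 e2 e3 using g[of "y*y"] by simp
qed

lemma sym_sq: "(x - (x+y)/2)^2 = (y - (x+y)/2)^2" for x y :: real
  by (simp add: power2_eq_square field_simps)

lemma small_case:
  assumes "a = 1 \<or> a = 2" "3 \<le> b" "F a + F b - (real (a+b) - 2) / 2 \<le> real (a+b) ^ 2 / 4"
  shows "(real a - (real a + real b) / 2)^2 \<le> real a + real b"
proof -
  have Fa: "F a = 0" "F b = real b * (real b - 1) / 2" using assms(1,2) by (auto simp: F_def)
  have h: "real b * (real b - 1) / 2 - (real a + real b - 2) / 2 \<le> (real a + real b)^2 / 4"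
    using assms(3) unfolding Fa by simp
  show ?thesis using assms(1)
  proof
    assume "a = 1" then show ?thesis using c2[of "real b"] h by simp
  next
    assume "a = 2" then show ?thesis using c3[of "real b"] h by simp
  qed
qed

lemma arith_main:
  assumes "1 \<le> a" "1 \<le> b" "F a + F b - (real (a+b) - 2) / 2 \<le> real (a+b) ^ 2 / 4"
  shows "(real a - real (a+b) / 2)^2 \<le> real (a+b)"
proof -
  consider "3 \<le> a" "3 \<le> b" | "a = 1 \<or> a = 2" "3 \<le> b" | "3 \<le> a" "b = 1 \<or> b = 2" | "a = 1 \<or> a = 2" "b = 1 \<or> b = 2"
    using assms by linarith
  then show ?thesis
  proof cases
    case 1
    then have "real a * (real a - 1) / 2 + real b * (real b - 1) / 2 - (real a + real b - 2) / 2 \<le> (real a + real b)^2 / 4"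
      using assms(3) by (simp add: F_def)
    then show ?thesis using c1 by simp
  next
    case 2
    then show ?thesis using small_case[OF 2 assms(3)] by simp
  next
    case 3
    have "F b + F a - (real (b+a) - 2) / 2 \<le> real (b+a) ^ 2 / 4" using assms(3) by (simp add: add.commute)
    from small_case[OF 3(2,1) this] have "(real b - (real b + real a) / 2)^2 \<le> real b + real a" .
    then show ?thesis using sym_sq[of "real a" "real b"] by (simp add: add.commute)
  next
    case 4
    then show ?thesis by (auto simp: power2_eq_square)
  qed
qed

lemma sq_sqrt: "(d::real)^2 \<le> n \<Longrightarrow> - sqrt n \<le> d \<and> d \<le> sqrt n"
proof -
  assume "d^2 \<le> n"
  then have "sqrt (d^2) \<le> sqrt n" by (rule real_sqrt_le_mono)
  then have "\<bar>d\<bar> \<le> sqrt n" by simp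
  then show ?thesis by linarith
qed

theorem proposition6p3:
  fixes V :: "'a set" and R :: "'a set set" and X1 X2 :: "'a set" and n :: nat
  assumes "finite V" and "card V = n"
    and "R \<subseteq> complete_edges V"
    and "pack V R \<le> real n ^ 2 / 4"
    and "X1 \<union> X2 = V" and "X1 \<inter> X2 = {}" and "X1 \<noteq> {}" and "X2 \<noteq> {}"
    and "real (card {e \<in> blue_edges V R. e \<subseteq> X1 \<or> e \<subseteq> X2}) \<le> (real n - 2) / 6"
  shows "real n / 2 - sqrt (real n) \<le> real (card X1) \<and> real (card X1) \<le> real n / 2 + sqrt (real n)
       \<and> real n / 2 - sqrt (real n) \<le> real (card X2) \<and> real (card X2) \<le> real n / 2 + sqrt (real n)"
proof -
  have f1: "finite X1" and f2: "finite X2" using assms(1,5) by auto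
  have n: "n = card X1 + card X2" using assms(2,5,6) f1 f2 card_Un_disjoint by metis
  have a1: "1 \<le> card X1" using f1 assms(7) by (simp add: Suc_le_eq card_gt_0_iff)
  have b1: "1 \<le> card X2" using f2 assms(8) by (simp add: Suc_le_eq card_gt_0_iff)
  have rb: "F (card X1) + F (card X2) - 3 * real (card {e\<in>blue_edges V R. e \<subseteq> X1 \<or> e \<subseteq> X2}) \<le> 3 * nu_star R"
    using red_bound[OF assms(1,3,5,6)] .
  have "blue_edges V R \<subseteq> complete_edges V" by (simp add: blue_edges_def)
  then have "0 \<le> nu_star (blue_edges V R)" using nu_star_nonneg[OF assms(1)] by blast
  then have "3 * nu_star R \<le> pack V R" by (simp add: pack_def)
  then have "F (card X1) + F (card X2) - (real (card X1 + card X2) - 2) / 2 \<le> real (card X1 + card X2) ^ 2 / 4"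
    unfolding n[symmetric] using rb assms(4,9) by linarith
  from arith_main[OF a1 b1 this] have sq: "(real (card X1) - real n / 2)^2 \<le> real n" using n by simp
  have sq2: "(real (card X2) - real n / 2)^2 \<le> real n"
  proof -
    have "real n = real (card X1) + real (card X2)" using n by simp
    then have "real (card X2) - real n / 2 = - (real (card X1) - real n / 2)" by linarith
    then show ?thesis using sq by (metis power2_minus)
  qed
  show ?thesis using sq_sqrt[OF sq] sq_sqrt[OF sq2] by linarith
qed

end
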